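(* Let $(a_n)_{n\in\mathbb{N}}$ be uniformly distributed in $[0,1]$, let $p\in(0,1)$, and let $(\xi_n)_{n\in\mathbb{N}}$ be i.i.d. random variables with values in $\{0,1\}$ and $\mathbb{P}(\xi_1=1)=p$. Let $m_1<m_2<\cdots$ enumerate $\{m:\xi_m=1\}$. Then, almost surely, the subsequence $(a_{m_i})_{i\in\mathbb{N}}$ is uniformly distributed in $[0,1]$.
   Context: A sequence $(a_n)$ in $[0,1]$ is uniformly distributed if $\lim_{n\to\infty}\frac1n\sum_{m=1}^n\mathbf 1_{[\alpha,\beta]}(a_m)=\beta-\alpha$ for all $0\leqslant\alpha<\beta\leqslant1$. *)

theory Defs
  imports "HOL-Probability.Probability"
begin

text \<open>Uniform distribution of a sequence in [0,1] (indices start at 0 here;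
  the definition is invariant under shifting the index).\<close>
definition uniformly_distributed :: "(nat \<Rightarrow> real) \<Rightarrow> bool" where
  "uniformly_distributed a \<longleftrightarrow>
     (\<forall>n. a n \<in> {0..1}) \<and>
     (\<forall>\<alpha> \<beta>. 0 \<le> \<alpha> \<and> \<alpha> < \<beta> \<and> \<beta> \<le> 1 \<longrightarrow>
        ((\<lambda>n. (1 / real n) * (\<Sum>m<n. indicator {\<alpha>..\<beta>} (a m))) \<longlonglongrightarrow> \<beta> - \<alpha>))"

end

theory Submission
  imports Defs
begin

lemma enum_sum:
  fixes E :: "nat set" and f :: "nat \<Rightarrow> real"
  assumes inf: "infinite E"
  shows "(\<Sum>m<enumerate E N. if m \<in> E then f m else 0) = (\<Sum>i<N. f (enumerate E i))"
proof (induction N)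
  case 0
  have "(\<Sum>m<enumerate E 0. if m \<in> E then f m else 0) = (\<Sum>m<enumerate E 0. 0)"
  proof (rule sum.cong)
    fix m assume m: "m \<in> {..<enumerate E 0}"
    have "m \<notin> E"
    proof
      assume "m \<in> E"
      then obtain j where "enumerate E j = m" using enumerate_Ex[OF inf] by blast
      then show False using m inf by (metis enumerate_mono_le_iff le0 lessThan_iff not_le)
    qed
    then show "(if m \<in> E then f m else 0) = 0" by simp
  qed simp
  then show ?case by simp
next
  case (Suc N)
  let ?r = "enumerate E"
  have lt: "?r N < ?r (Suc N)" using inf by simp
  have split: "{..<?r (Suc N)} = {..<?r N} \<union> {?r N..<?r (Suc N)}" using lt by auto
  have "(\<Sum>m\<in>{?r N..<?r (Suc N)}. if m \<in> E then f m else 0) = (\<Sum>m\<in>{?r N..<?r (Suc N)}. if m = ?r N then f m else 0)"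
  proof (rule sum.cong)
    fix m assume m: "m \<in> {?r N..<?r (Suc N)}"
    have "m \<in> E \<longleftrightarrow> m = ?r N"
    proof
      assume "m \<in> E"
      then obtain j where j: "?r j = m" using enumerate_Ex[OF inf] by blast
      then have "N \<le> j" "j < Suc N" using m inf by auto
      then have "j = N" by simp
      then show "m = ?r N" using j by simp
    next
      assume "m = ?r N" then show "m \<in> E" using enumerate_in_set[OF inf] by simp
    qed
    then show "(if m \<in> E then f m else 0) = (if m = ?r N then f m else 0)" by simp
  qed simp
  also have "\<dots> = f (?r N)" using lt by (simp add: sum.delta)
  finally have 2: "(\<Sum>m\<in>{?r N..<?r (Suc N)}. if m \<in> E then f m else 0) = f (?r N)" .
  have "(\<Sum>m<?r (Suc N). if m \<in> E then f m else 0) = (\<Sum>m<?r N. if m \<in> E then f m else 0) + (\<Sum>m\<in>{?r N..<?r (Suc N)}. if m \<in> E then f m else 0)"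
    unfolding split by (rule sum.union_disjoint) auto
  then show ?case using 2 Suc by simp
qed


definition freq :: "(nat \<Rightarrow> real) \<Rightarrow> real set \<Rightarrow> nat \<Rightarrow> real" where
  "freq b I n = (1 / real n) * (\<Sum>m<n. indicator I (b m))"

lemma freq_mono: "I \<subseteq> J \<Longrightarrow> freq b I n \<le> freq b J n"
  unfolding freq_def
  by (intro mult_left_mono sum_mono) (auto simp: indicator_def)

lemma sandwich:
  fixes b :: "nat \<Rightarrow> real" and \<alpha> \<beta> :: real
  assumes hq: "\<And>x y. x \<in> \<rat> \<Longrightarrow> y \<in> \<rat> \<Longrightarrow> 0 \<le> x \<Longrightarrow> x < y \<Longrightarrow> y \<le> 1 \<Longrightarrow>
      freq b {x..y} \<longlonglongrightarrow> y - x"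
  and ab: "0 \<le> \<alpha>" "\<alpha> < \<beta>" "\<beta> \<le> 1"
  shows "freq b {\<alpha>..\<beta>} \<longlonglongrightarrow> \<beta> - \<alpha>"
proof (rule LIMSEQ_I)
  fix r :: real assume r: "0 < r"
  define \<epsilon> where "\<epsilon> = r / 3"
  have e: "\<epsilon> > 0" using r by (simp add: \<epsilon>_def)
  obtain q1 where q1: "q1 \<in> \<rat>" "\<alpha> - \<epsilon> < q1" "q1 < \<alpha>" using Rats_dense_in_real[of "\<alpha> - \<epsilon>" \<alpha>] e by auto
  obtain q2 where q2: "q2 \<in> \<rat>" "\<beta> < q2" "q2 < \<beta> + \<epsilon>" using Rats_dense_in_real[of \<beta> "\<beta> + \<epsilon>"] e by auto
  define a1 where "a1 = max 0 q1"
  define b1 where "b1 = min 1 q2"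
  have a1: "a1 \<in> \<rat>" "0 \<le> a1" "a1 \<le> \<alpha>" "\<alpha> - \<epsilon> < a1"
    using q1 ab e by (auto simp: a1_def max_def)
  have b1: "b1 \<in> \<rat>" "b1 \<le> 1" "\<beta> \<le> b1" "b1 < \<beta> + \<epsilon>"
    using q2 ab e by (auto simp: b1_def min_def)
  have up: "freq b {a1..b1} \<longlonglongrightarrow> b1 - a1" using hq[OF a1(1) b1(1) a1(2)] a1 b1 ab by auto
  have ev1: "eventually (\<lambda>n. freq b {a1..b1} n < \<beta> - \<alpha> + 2 * \<epsilon>) sequentially"
    by (rule order_tendstoD(2)[OF up]) (use a1 b1 in auto)
  define \<delta> where "\<delta> = min \<epsilon> ((\<beta> - \<alpha>) / 3)"
  have d: "\<delta> > 0" "\<delta> \<le> \<epsilon>" "\<delta> \<le> (\<beta> - \<alpha>) / 3" using e ab unfolding \<delta>_def min_def by auto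
  obtain a2 where a2: "a2 \<in> \<rat>" "\<alpha> < a2" "a2 < \<alpha> + \<delta>" using Rats_dense_in_real[of \<alpha> "\<alpha> + \<delta>"] d by auto
  obtain b2 where b2: "b2 \<in> \<rat>" "\<beta> - \<delta> < b2" "b2 < \<beta>" using Rats_dense_in_real[of "\<beta> - \<delta>" \<beta>] d by auto
  have lo: "freq b {a2..b2} \<longlonglongrightarrow> b2 - a2" using hq[OF a2(1) b2(1)] a2 b2 ab d by auto
  have ev2: "eventually (\<lambda>n. \<beta> - \<alpha> - 2 * \<epsilon> < freq b {a2..b2} n) sequentially"
    by (rule order_tendstoD(1)[OF lo]) (use a2 b2 d in auto)
  have "eventually (\<lambda>n. norm (freq b {\<alpha>..\<beta>} n - (\<beta> - \<alpha>)) < r) sequentially"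
    using ev1 ev2
  proof eventually_elim
    case (elim n)
    have "freq b {\<alpha>..\<beta>} n \<le> freq b {a1..b1} n" by (rule freq_mono) (use a1 b1 in auto)
    moreover have "freq b {a2..b2} n \<le> freq b {\<alpha>..\<beta>} n" by (rule freq_mono) (use a2 b2 in auto)
    ultimately show ?case using elim r unfolding \<epsilon>_def by (simp add: abs_less_iff)
  qed
  then show "\<exists>no. \<forall>n\<ge>no. norm (freq b {\<alpha>..\<beta>} n - (\<beta> - \<alpha>)) < r"
    by (simp add: eventually_sequentially)
qed

lemma freq_sub:
  fixes E :: "nat set" and c :: "nat \<Rightarrow> real" and p L :: real
  assumes p: "0 < p" and inf: "infinite E"
  and hC: "(\<lambda>n. (\<Sum>i<n. if i \<in> E then 1 else 0) / real n) \<longlonglongrightarrow> p"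
  and hc: "(\<lambda>n. (\<Sum>i<n. (if i \<in> E then c i else 0) - p * c i) / real n) \<longlonglongrightarrow> 0"
  and hL: "(\<lambda>n. (1 / real n) * (\<Sum>i<n. c i)) \<longlonglongrightarrow> L"
  shows "(\<lambda>N. (1 / real N) * (\<Sum>i<N. c (enumerate E i))) \<longlonglongrightarrow> L"
proof -
  define T where "T n = (\<Sum>i<n. if i \<in> E then c i else 0)" for n
  define C where "C n = (\<Sum>i<n. if i \<in> E then 1 else 0::real)" for n
  have "(\<lambda>n. (\<Sum>i<n. (if i \<in> E then c i else 0) - p * c i) / real n + p * ((1 / real n) * (\<Sum>i<n. c i))) \<longlonglongrightarrow> 0 + p * L"
    by (intro tendsto_intros hc hL)
  moreover have "(\<Sum>i<n. (if i \<in> E then c i else 0) - p * c i) / real n + p * ((1 / real n) * (\<Sum>i<n. c i)) = T n / real n" for n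
    unfolding T_def sum_subtractf sum_distrib_left[symmetric] by (simp add: diff_divide_distrib)
  ultimately have hT: "(\<lambda>n. T n / real n) \<longlonglongrightarrow> p * L" by simp
  have "(\<lambda>n. (T n / real n) / (C n / real n)) \<longlonglongrightarrow> (p * L) / p"
    using hT hC p unfolding C_def by (intro tendsto_divide) auto
  then have "(\<lambda>n. (T n / real n) / (C n / real n)) \<longlonglongrightarrow> L" using p by simp
  moreover have "eventually (\<lambda>n. (T n / real n) / (C n / real n) = T n / C n) sequentially"
    using eventually_gt_at_top[of "0::nat"] by eventually_elim simp
  ultimately have "(\<lambda>n. T n / C n) \<longlonglongrightarrow> L" by (rule Lim_transform_eventually)
  from LIMSEQ_subseq_LIMSEQ[OF this strict_mono_enumerate[OF inf]]
  have "(\<lambda>N. T (enumerate E N) / C (enumerate E N)) \<longlonglongrightarrow> L" by (simp add: comp_def)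
  moreover have "T (enumerate E N) / C (enumerate E N) = (1 / real N) * (\<Sum>i<N. c (enumerate E i))" for N
  proof -
    have "T (enumerate E N) = (\<Sum>i<N. c (enumerate E i))" unfolding T_def by (rule enum_sum[OF inf])
    moreover have "C (enumerate E N) = (\<Sum>i<N. 1)" unfolding C_def using enum_sum[OF inf, of "\<lambda>_. 1"] by simp
    ultimately show ?thesis by simp
  qed
  ultimately show ?thesis by simp
qed


lemma det:
  fixes E :: "nat set" and a :: "nat \<Rightarrow> real" and p :: real
  assumes p: "0 < p" and ud: "uniformly_distributed a"
  and h1: "(\<lambda>n. (\<Sum>i<n. (if i \<in> E then 1 else 0) - p * 1) / real n) \<longlonglongrightarrow> 0"
  and h2: "\<And>x y. x \<in> \<rat> \<Longrightarrow> y \<in> \<rat> \<Longrightarrow>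
     (\<lambda>n. (\<Sum>i<n. (if i \<in> E then indicator {x..y} (a i) else 0) - p * indicator {x..y} (a i)) / real n) \<longlonglongrightarrow> 0"
  shows "infinite E \<and> uniformly_distributed (\<lambda>i. a (enumerate E i))"
proof -
  have "(\<lambda>n. (\<Sum>i<n. (if i \<in> E then 1 else 0) - p * 1) / real n + p) \<longlonglongrightarrow> 0 + p"
    by (intro tendsto_intros h1)
  moreover have "eventually (\<lambda>n. (\<Sum>i<n. (if i \<in> E then 1 else 0) - p * 1) / real n + p
      = (\<Sum>i<n. if i \<in> E then 1 else 0) / real n) sequentially"
    using eventually_gt_at_top[of "0::nat"]
    by eventually_elim (simp add: sum_subtractf diff_divide_distrib)
  ultimately have hC: "(\<lambda>n. (\<Sum>i<n. if i \<in> E then 1 else 0) / real n) \<longlonglongrightarrow> p"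
    using Lim_transform_eventually by fastforce
  have inf: "infinite E"
  proof
    assume fin: "finite E"
    then obtain N where N: "E \<subseteq> {..<N}" using finite_nat_bounded by blast
    have "eventually (\<lambda>n. real (card E) / real n = (\<Sum>i<n. if i \<in> E then 1 else 0) / real n) sequentially"
      using eventually_ge_at_top[of N]
    proof eventually_elim
      case (elim n)
      have "(\<Sum>i<n. if i \<in> E then 1 else (0::real)) = (\<Sum>i\<in>{x\<in>{..<n}. x \<in> E}. 1)"
        by (subst sum.inter_filter) auto
      also have "{x\<in>{..<n}. x \<in> E} = E" using N elim by auto
      finally show ?case by simp
    qed
    with lim_const_over_n[of "real (card E)"]
    have "(\<lambda>n. (\<Sum>i<n. if i \<in> E then 1 else 0) / real n) \<longlonglongrightarrow> 0"
      using Lim_transform_eventually by fastforce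
    with hC have "p = 0" using LIMSEQ_unique by blast
    with p show False by simp
  qed
  have a01: "a n \<in> {0..1}" for n using ud unfolding uniformly_distributed_def by blast
  have hq: "freq (\<lambda>i. a (enumerate E i)) {x..y} \<longlonglongrightarrow> y - x"
    if "x \<in> \<rat>" "y \<in> \<rat>" "0 \<le> x" "x < y" "y \<le> 1" for x y
  proof -
    have L: "(\<lambda>n. (1 / real n) * (\<Sum>i<n. indicator {x..y} (a i))) \<longlonglongrightarrow> y - x"
      using ud that unfolding uniformly_distributed_def by blast
    show ?thesis unfolding freq_def
      by (rule freq_sub[OF p inf hC h2[OF that(1,2)] L])
  qed
  have "freq (\<lambda>i. a (enumerate E i)) {\<alpha>..\<beta>} \<longlonglongrightarrow> \<beta> - \<alpha>"
    if "0 \<le> \<alpha>" "\<alpha> < \<beta>" "\<beta> \<le> 1" for \<alpha> \<beta>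
    by (rule sandwich[OF hq that])
  then show ?thesis using inf a01 unfolding uniformly_distributed_def freq_def by blast
qed


lemma (in prob_space) hoeff_pos:
  fixes X :: "nat \<Rightarrow> 'a \<Rightarrow> real" and e :: real
  assumes indep: "indep_vars (\<lambda>_. borel) X UNIV"
  and meas[measurable]: "\<And>i. X i \<in> borel_measurable M"
  and bnd: "\<And>i x. x \<in> space M \<Longrightarrow> X i x \<in> {0..1}"
  and e: "e > 0" and n: "n > 0"
  shows "prob {x \<in> space M. \<bar>(\<Sum>i\<in>{..<n}. X i x) - (\<Sum>i\<in>{..<n}. expectation (X i))\<bar> \<ge> real n * e}
     \<le> 2 * exp (-2 * e\<^sup>2) ^ n"
proof -
  interpret H: Hoeffding_ineq M "{..<n}" X "\<lambda>_. 0" "\<lambda>_. 1" "\<Sum>i\<in>{..<n}. expectation (X i)"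
  proof unfold_locales
    show "finite {..<n}" by simp
    show "indep_vars (\<lambda>_. borel) X {..<n}" by (rule indep_vars_subset[OF indep]) simp
    show "AE x in M. X i x \<in> {0..1}" for i by (rule AE_I2) (rule bnd)
  qed
  have "prob {x \<in> space M. \<bar>(\<Sum>i\<in>{..<n}. X i x) - (\<Sum>i\<in>{..<n}. expectation (X i))\<bar> \<ge> real n * e}
     \<le> 2 * exp (-2 * (real n * e)\<^sup>2 / (\<Sum>i\<in>{..<n}. (1 - 0)\<^sup>2))"
    by (rule H.Hoeffding_ineq_abs_ge) (use e n in simp_all)
  also have "-2 * (real n * e)\<^sup>2 / (\<Sum>i\<in>{..<n}. (1 - 0)\<^sup>2) = real n * (-2 * e\<^sup>2)"
    using n by (simp add: power2_eq_square)
  also have "exp (real n * (-2 * e\<^sup>2)) = exp (-2 * e\<^sup>2) ^ n" by (rule exp_of_nat_mult)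
  finally show ?thesis .
qed

lemma (in prob_space) hoeff_bound:
  fixes X :: "nat \<Rightarrow> 'a \<Rightarrow> real" and e :: real
  assumes indep: "indep_vars (\<lambda>_. borel) X UNIV"
  and meas[measurable]: "\<And>i. X i \<in> borel_measurable M"
  and bnd: "\<And>i x. x \<in> space M \<Longrightarrow> X i x \<in> {0..1}"
  and e: "e > 0"
  shows "prob {x \<in> space M. \<bar>(\<Sum>i\<in>{..<n}. X i x) - (\<Sum>i\<in>{..<n}. expectation (X i))\<bar> \<ge> real n * e}
     \<le> 2 * exp (-2 * e\<^sup>2) ^ n"
proof (cases "n = 0")
  case True
  have eq: "{x \<in> space M. \<bar>(\<Sum>i\<in>{..<n}. X i x) - (\<Sum>i\<in>{..<n}. expectation (X i))\<bar> \<ge> real n * e} = space M"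
    unfolding True by simp
  have p1: "prob (space M) = 1" by (rule prob_space)
  have p2: "prob (space M) \<le> 2" using p1 by linarith
  show ?thesis unfolding eq unfolding True power_0 mult_1_right by (rule p2)
next
  case False
  then show ?thesis using hoeff_pos[OF indep meas bnd e] by simp
qed

lemma (in prob_space) slln_bounded:
  fixes X :: "nat \<Rightarrow> 'a \<Rightarrow> real"
  assumes indep: "indep_vars (\<lambda>_. borel) X UNIV"
  and meas[measurable]: "\<And>i. X i \<in> borel_measurable M"
  and bnd: "\<And>i x. x \<in> space M \<Longrightarrow> X i x \<in> {0..1}"
  shows "AE x in M. (\<lambda>n. (\<Sum>i<n. X i x - expectation (X i)) / real n) \<longlonglongrightarrow> 0"
proof -
  define A where "A k n = {x \<in> space M. \<bar>(\<Sum>i\<in>{..<n}. X i x) - (\<Sum>i\<in>{..<n}. expectation (X i))\<bar> \<ge> real n * (1 / real (Suc k))}" for k n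
  have Ak: "AE x in M. eventually (\<lambda>n. x \<in> space M - A k n) sequentially" for k
  proof (rule borel_cantelli_AE1)
    show "A k n \<in> sets M" for n unfolding A_def by measurable
    show "emeasure M (A k n) < \<infinity>" for n by (simp add: less_top[symmetric])
    let ?q = "exp (-2 * (1 / real (Suc k))\<^sup>2)"
    have "summable (\<lambda>n. 2 * ?q ^ n)" by (intro summable_mult summable_geometric) simp
    note sg = this
    have nb: "norm (measure M (A k n)) \<le> 2 * ?q ^ n" for n
      unfolding A_def using hoeff_bound[OF indep meas bnd, of "1 / real (Suc k)" n] by simp
    show "summable (\<lambda>n. measure M (A k n))"
      by (rule summable_comparison_test'[OF sg nb])
  qed
  then have "AE x in M. \<forall>k. eventually (\<lambda>n. x \<in> space M - A k n) sequentially"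
    by (simp add: AE_all_countable)
  then show ?thesis
  proof (rule AE_mp[OF _ AE_I2], intro impI)
    fix x assume x: "x \<in> space M" and h: "\<forall>k. eventually (\<lambda>n. x \<in> space M - A k n) sequentially"
    show "(\<lambda>n. (\<Sum>i<n. X i x - expectation (X i)) / real n) \<longlonglongrightarrow> 0"
    proof (rule LIMSEQ_I)
      fix r :: real assume r: "0 < r"
      obtain k where k: "inverse (real (Suc k)) < r" using reals_Archimedean[OF r] by blast
      have "eventually (\<lambda>n. norm ((\<Sum>i<n. X i x - expectation (X i)) / real n - 0) < r) sequentially"
        using h[rule_format, of k] eventually_gt_at_top[of "0::nat"]
      proof eventually_elim
        case (elim n)
        then have "\<bar>(\<Sum>i<n. X i x - expectation (X i))\<bar> < real n * (1 / real (Suc k))"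
          using x unfolding A_def by (auto simp: sum_subtractf)
        then have "\<bar>(\<Sum>i<n. X i x - expectation (X i))\<bar> / real n < 1 / real (Suc k)"
          using elim by (simp add: divide_less_eq mult.commute)
        moreover have "1 / real (Suc k) < r" using k by (simp add: inverse_eq_divide)
        ultimately have "\<bar>(\<Sum>i<n. X i x - expectation (X i))\<bar> / real n < r" by linarith
        then show ?case by simp
      qed
      then show "\<exists>no. \<forall>n\<ge>no. norm ((\<Sum>i<n. X i x - expectation (X i)) / real n - 0) < r"
        by (simp add: eventually_sequentially)
    qed
  qed
qed


theorem theoremA1:
  fixes M :: "'w measure" and a :: "nat \<Rightarrow> real" and p :: real
    and \<xi> :: "nat \<Rightarrow> 'w \<Rightarrow> nat"
  assumes "prob_space M"
    and "uniformly_distributed a"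
    and "0 < p" and "p < 1"
    and "\<And>n. \<xi> n \<in> measurable M (count_space UNIV)"
    and "\<And>n \<omega>. \<omega> \<in> space M \<Longrightarrow> \<xi> n \<omega> \<in> {0, 1}"
    and "prob_space.indep_vars M (\<lambda>_. count_space UNIV) \<xi> UNIV"
    and "\<And>n. distr M (count_space UNIV) (\<xi> n) = distr M (count_space UNIV) (\<xi> 0)"
    and "measure M {\<omega> \<in> space M. \<xi> 0 \<omega> = 1} = p"
  shows "AE \<omega> in M. infinite {m. \<xi> m \<omega> = 1} \<and>
           uniformly_distributed (\<lambda>i. a (enumerate {m. \<xi> m \<omega> = 1} i))"
proof -
  interpret prob_space M by fact
  note xm = assms(5)
  define S where "S i = {\<omega> \<in> space M. \<xi> i \<omega> = 1}" for i
  have Ssets: "S i \<in> sets M" for i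
  proof -
    have "S i = \<xi> i -` {1} \<inter> space M" unfolding S_def by auto
    also have "\<dots> \<in> sets M" by (rule measurable_sets[OF xm]) simp
    finally show ?thesis .
  qed
  have Sp: "measure M (S i) = p" for i
  proof -
    have "measure M (S i) = measure M (\<xi> i -` {1} \<inter> space M)" unfolding S_def by (rule arg_cong[where f="measure M"]) auto
    also have "\<dots> = measure (distr M (count_space UNIV) (\<xi> i)) {1}" by (rule measure_distr[symmetric, OF xm]) simp
    also have "\<dots> = measure (distr M (count_space UNIV) (\<xi> 0)) {1}" by (subst assms(8)[of i]) (rule refl)
    also have "\<dots> = measure M (\<xi> 0 -` {1} \<inter> space M)" by (rule measure_distr[OF xm]) simp
    also have "\<dots> = measure M {\<omega> \<in> space M. \<xi> 0 \<omega> = 1}" by (rule arg_cong[where f="measure M"]) auto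
    finally show ?thesis using assms(9) by simp
  qed
  have gen: "AE \<omega> in M. (\<lambda>n. (\<Sum>i<n. (if i \<in> {m. \<xi> m \<omega> = 1} then c i else 0) - p * c i) / real n) \<longlonglongrightarrow> 0"
    if c01: "\<And>i. c i \<in> {0..1}" for c :: "nat \<Rightarrow> real"
  proof -
    define X where "X i \<omega> = (if \<xi> i \<omega> = 1 then c i else 0)" for i \<omega>
    have Xm: "X i \<in> borel_measurable M" for i
    proof -
      have "(\<lambda>\<omega>. (\<lambda>x. if x = 1 then c i else 0) (\<xi> i \<omega>)) \<in> borel_measurable M"
        by (rule measurable_compose[OF xm borel_measurable_count_space])
      then show ?thesis unfolding X_def by simp
    qed
    have Xi: "indep_vars (\<lambda>_. borel) X UNIV"
    proof -
      have "indep_vars (\<lambda>_. borel) (\<lambda>i \<omega>. (\<lambda>x. if x = 1 then c i else 0) (\<xi> i \<omega>)) UNIV"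
        by (rule indep_vars_compose2[OF assms(7)]) (rule borel_measurable_count_space)
      then show ?thesis unfolding X_def by simp
    qed
    have Xb: "X i \<omega> \<in> {0..1}" for i \<omega> using c01[of i] unfolding X_def by auto
    have EX: "expectation (X i) = p * c i" for i
    proof -
      have "expectation (X i) = (LINT \<omega>|M. c i * indicator (S i) \<omega>)"
        by (rule Bochner_Integration.integral_cong) (auto simp: X_def S_def indicator_def)
      also have "\<dots> = c i * (LINT \<omega>|M. indicator (S i) \<omega>)" by (rule integral_mult_right_zero)
      also have "(LINT \<omega>|M. indicator (S i) \<omega>) = measure M (S i)"
        using Ssets[of i] by (simp add: less_top[symmetric])
      finally show ?thesis using Sp[of i] by simp
    qed
    have "AE \<omega> in M. (\<lambda>n. (\<Sum>i<n. X i \<omega> - expectation (X i)) / real n) \<longlonglongrightarrow> 0"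
      by (rule slln_bounded[OF Xi Xm Xb])
    then show ?thesis by (simp add: EX X_def)
  qed
  have A1: "AE \<omega> in M. (\<lambda>n. (\<Sum>i<n. (if i \<in> {m. \<xi> m \<omega> = 1} then 1 else 0) - p * 1) / real n) \<longlonglongrightarrow> 0"
    using gen[of "\<lambda>_. 1"] by simp
  have "AE \<omega> in M. \<forall>q::rat \<times> rat. (\<lambda>n. (\<Sum>i<n. (if i \<in> {m. \<xi> m \<omega> = 1} then indicator {of_rat (fst q)..of_rat (snd q)} (a i) else 0)
      - p * indicator {of_rat (fst q)..of_rat (snd q)} (a i)) / real n) \<longlonglongrightarrow> 0"
    unfolding AE_all_countable
  proof
    fix q :: "rat \<times> rat"
    show "AE \<omega> in M. (\<lambda>n. (\<Sum>i<n. (if i \<in> {m. \<xi> m \<omega> = 1} then indicator {of_rat (fst q)..of_rat (snd q)} (a i) else 0)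
      - p * indicator {of_rat (fst q)..of_rat (snd q)} (a i)) / real n) \<longlonglongrightarrow> 0"
      by (rule gen) (simp add: indicator_def)
  qed
  with A1 show ?thesis
  proof (eventually_elim)
    case (elim \<omega>)
    show ?case
    proof (rule det[OF assms(3) assms(2) elim(1)])
      fix x y :: real assume "x \<in> \<rat>" "y \<in> \<rat>"
      then obtain r1 r2 where xy: "x = of_rat r1" "y = of_rat r2" by (auto elim!: Rats_cases)
      note h = elim(2)[rule_format, of "(r1, r2)", unfolded fst_conv snd_conv]
      show "(\<lambda>n. (\<Sum>i<n. (if i \<in> {m. \<xi> m \<omega> = 1} then indicator {x..y} (a i) else 0) - p * indicator {x..y} (a i)) / real n) \<longlonglongrightarrow> 0"
        unfolding xy by (rule h)
    qed
  qed
qed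

end
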